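(* As closed quantum subgroups of $U_N^+$, $\mathbb TO_N^+\cap U_N^\times=\mathbb TO_N^*$. Equivalently: if the standard coordinates $u_{ij}$ of a closed quantum subgroup $G\subset U_N^+$ satisfy $ab^*=a^*b$ and $ab^*c=cb^*a$ for all $a,b,c\in\{u_{ij}\}$, then they satisfy $abc=cba$ for all $a,b,c\in\{u_{ij},u_{ij}^*\}$.
   Context: $C(U_N^+)$ is the universal unital C*-algebra generated by $u_{ij}$ such that $u=(u_{ij})$ and $\bar u=(u_{ij}^* )$ are unitary, a compact quantum group with $\Delta(u_{ij})=\sum_ku_{ik}\otimes u_{kj}$; closed quantum subgroups correspond to Hopf quotients, and an intersection $G\cap H$ corresponds to imposing both sets of relations. $\mathbb TO_N^+$: impose $ab^*=a^*b$ for $a,b\in\{u_{ij}\}$; $U_N^\times$: impose $ab^*c=cb^*a$ for $a,b,c\in\{u_{ij}\}$; $U_N^{**}$: impose $abc=cba$ for $a,b,c\in\{u_{ij},u_{ij}^*\}$; $\mathbb TO_N^*=\mathbb TO_N^+\cap U_N^{**}$. *)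

theory Defs
  imports Complex_Main
begin

class cstar_algebra = real_normed_algebra_1 + banach +
  fixes scaleC :: "complex \<Rightarrow> 'a \<Rightarrow> 'a"
    and adj :: "'a \<Rightarrow> 'a"
  assumes scaleC_of_real: "scaleC (complex_of_real r) x = scaleR r x"
    and scaleC_add_right: "scaleC c (x + y) = scaleC c x + scaleC c y"
    and scaleC_add_left: "scaleC (c + d) x = scaleC c x + scaleC d x"
    and scaleC_scaleC: "scaleC c (scaleC d x) = scaleC (c * d) x"
    and scaleC_one: "scaleC 1 x = x"
    and scaleC_mult_left: "scaleC c (x * y) = scaleC c x * y"
    and scaleC_mult_right: "scaleC c (x * y) = x * scaleC c y"
    and norm_scaleC: "norm (scaleC c x) = cmod c * norm x"
    and adj_adj: "adj (adj x) = x"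
    and adj_add: "adj (x + y) = adj x + adj y"
    and adj_mult: "adj (x * y) = adj y * adj x"
    and adj_scaleC: "adj (scaleC c x) = scaleC (cnj c) (adj x)"
    and cstar_identity: "norm (adj x * x) = (norm x)\<^sup>2"

text \<open>The matrix u = (u i j) for i,j<N and its conjugate
  (adj (u i j)) are both unitary.\<close>

definition biunitary :: "nat \<Rightarrow> (nat \<Rightarrow> nat \<Rightarrow> 'a::cstar_algebra) \<Rightarrow> bool" where
  "biunitary N u \<longleftrightarrow>
     (\<forall>i<N. \<forall>j<N.
        (\<Sum>k<N. u i k * adj (u j k)) = (if i = j then 1 else 0) \<and>
        (\<Sum>k<N. adj (u k i) * u k j) = (if i = j then 1 else 0) \<and>
        (\<Sum>k<N. adj (u i k) * u j k) = (if i = j then 1 else 0) \<and>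
        (\<Sum>k<N. u k i * adj (u k j)) = (if i = j then 1 else 0))"

definition coords :: "nat \<Rightarrow> (nat \<Rightarrow> nat \<Rightarrow> 'a) \<Rightarrow> 'a set" where
  "coords N u = {u i j | i j. i < N \<and> j < N}"

end

theory Submission
  imports Defs
begin

lemma zero_star:
  fixes N :: nat and u :: "nat \<Rightarrow> nat \<Rightarrow> 'a::cstar_algebra"
  assumes bu: "biunitary N u"
    and H: "\<And>a b. a\<in>coords N u \<Longrightarrow> b\<in>coords N u \<Longrightarrow> a * adj b = adj a * b"
    and K: "\<And>a b c. a\<in>coords N u \<Longrightarrow> b\<in>coords N u \<Longrightarrow> c\<in>coords N u \<Longrightarrow>
           a * adj b * c = c * adj b * a"
    and ab: "a\<in>coords N u" "b\<in>coords N u" "c\<in>coords N u"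
  shows "a * b * c = c * b * a"
proof -
  from ab(1) have N: "0 < N" unfolding coords_def by auto
  have one: "(\<Sum>k<N. adj (u k 0) * u k 0) = 1"
    using bu N unfolding biunitary_def by auto
  have step: "a * b * adj x * x * c = c * b * adj x * x * a" if x: "x \<in> coords N u" for x
  proof -
    have e1: "adj x * x = x * adj x" using H[OF x x] by simp
    have e2: "x * adj x * c = c * adj x * x" using K[OF x x ab(3)] .
    have e3: "c * adj x = adj c * x" using H[OF ab(3) x] .
    have e3b: "b * adj c = adj b * c" using H[OF ab(2) ab(3)] .
    have e4: "a * adj b * c = c * adj b * a" using K[OF ab(1) ab(2) ab(3)] .
    have e5: "adj b * a = b * adj a" using H[OF ab(2) ab(1)] by simp
    have e5b: "adj a * x = a * adj x" using H[OF ab(1) x] by simp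
    have e6: "a * adj x * x = x * adj x * a" using K[OF ab(1) x x] .
    have "a * b * adj x * x * c = a * b * (x * adj x * c)" using e1 by (simp add: mult.assoc)
    also have "\<dots> = a * b * (c * adj x) * x" using e2 by (simp add: mult.assoc)
    also have "\<dots> = a * (b * adj c) * x * x" using e3 by (simp add: mult.assoc)
    also have "\<dots> = (a * adj b * c) * x * x" using e3b by (simp add: mult.assoc)
    also have "\<dots> = c * (adj b * a) * x * x" using e4 by (simp add: mult.assoc)
    also have "\<dots> = c * b * (adj a * x) * x" using e5 by (simp add: mult.assoc)
    also have "\<dots> = c * b * (a * adj x * x)" using e5b by (simp add: mult.assoc)
    also have "\<dots> = c * b * (x * adj x) * a" using e6 by (simp add: mult.assoc)
    also have "\<dots> = c * b * adj x * x * a" using e1 by (simp add: mult.assoc)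
    finally show ?thesis .
  qed
  have xk: "\<And>k. k < N \<Longrightarrow> u k 0 \<in> coords N u" using N unfolding coords_def by blast
  have "a * b * c = a * b * (\<Sum>k<N. adj (u k 0) * u k 0) * c" by (simp add: one)
  also have "\<dots> = (\<Sum>k<N. a * b * adj (u k 0) * u k 0 * c)"
    by (simp add: sum_distrib_left sum_distrib_right mult.assoc)
  also have "\<dots> = (\<Sum>k<N. c * b * adj (u k 0) * u k 0 * a)"
    by (rule sum.cong) (auto intro: step xk)
  also have "\<dots> = c * b * (\<Sum>k<N. adj (u k 0) * u k 0) * a"
    by (simp add: sum_distrib_left sum_distrib_right mult.assoc)
  finally show ?thesis by (simp add: one)
qed

theorem proposition3p6:
  fixes N :: nat and u :: "nat \<Rightarrow> nat \<Rightarrow> 'a::cstar_algebra"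
  assumes "biunitary N u"
    and "\<forall>a\<in>coords N u. \<forall>b\<in>coords N u. a * adj b = adj a * b"
    and "\<forall>a\<in>coords N u. \<forall>b\<in>coords N u. \<forall>c\<in>coords N u.
           a * adj b * c = c * adj b * a"
  shows "\<forall>a\<in>coords N u \<union> adj ` coords N u. \<forall>b\<in>coords N u \<union> adj ` coords N u.
           \<forall>c\<in>coords N u \<union> adj ` coords N u. a * b * c = c * b * a"
proof -
  let ?C = "coords N u"
  have H: "\<And>a b. a\<in>?C \<Longrightarrow> b\<in>?C \<Longrightarrow> a * adj b = adj a * b" using assms(2) by blast
  have K: "\<And>a b c. a\<in>?C \<Longrightarrow> b\<in>?C \<Longrightarrow> c\<in>?C \<Longrightarrow> a * adj b * c = c * adj b * a"
    using assms(3) by blast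
  have Z: "\<And>a b c. a\<in>?C \<Longrightarrow> b\<in>?C \<Longrightarrow> c\<in>?C \<Longrightarrow> a * b * c = c * b * a"
    using zero_star[OF assms(1) H K] by blast
  have T3: "a * b * adj c = adj c * b * a" if "a\<in>?C" "b\<in>?C" "c\<in>?C" for a b c
  proof -
    have "a * b * adj c = a * adj b * c" using H[OF that(2,3)] by (simp add: mult.assoc)
    also have "\<dots> = c * adj b * a" using K[OF that] .
    also have "\<dots> = adj c * b * a" using H[OF that(3,2)] by simp
    finally show ?thesis .
  qed
  have adjeq: "\<And>x y z. x * y * z = z * y * x \<Longrightarrow> adj z * adj y * adj x = adj x * adj y * adj z"
    by (metis adj_mult mult.assoc)
  show ?thesis
  proof (intro ballI)
    fix a b c assume a: "a \<in> ?C \<union> adj ` ?C" and b: "b \<in> ?C \<union> adj ` ?C" and c: "c \<in> ?C \<union> adj ` ?C"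
    obtain a' where a': "a' \<in> ?C" "a = a' \<or> a = adj a'" using a by blast
    obtain b' where b': "b' \<in> ?C" "b = b' \<or> b = adj b'" using b by blast
    obtain c' where c': "c' \<in> ?C" "c = c' \<or> c = adj c'" using c by blast
    note T3' = T3[OF a'(1) b'(1) c'(1)] and T3r = T3[OF c'(1) b'(1) a'(1)]
    note K' = K[OF a'(1) b'(1) c'(1)] and Z' = Z[OF a'(1) b'(1) c'(1)]
    have A1: "adj a' * adj b' * c' = c' * adj b' * adj a'"
      using adjeq[OF T3'] by (simp add: adj_adj)
    have A2: "adj a' * b' * adj c' = adj c' * b' * adj a'"
      using adjeq[OF K'] by (simp add: adj_adj)
    have A3: "a' * adj b' * adj c' = adj c' * adj b' * a'"
      using adjeq[OF T3r] by (simp add: adj_adj)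
    have A4: "adj a' * adj b' * adj c' = adj c' * adj b' * adj a'"
      using adjeq[OF Z[OF c'(1) b'(1) a'(1)]] by simp
    show "a * b * c = c * b * a"
      using a'(2) b'(2) c'(2) T3' T3r K' Z' A1 A2 A3 A4 by auto
  qed
qed

end
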